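(* Let $\Gamma$ be a finitely generated abelian group, $\mathcal{A}=\{\alpha_1,\dots,\alpha_n\}\subset\Gamma$ a finite list, $G$ a torsion-wise finite abelian group, and fix $\alpha_i\in\mathcal{A}$. Let $\mathcal{A}'=\mathcal{A}\smallsetminus\{\alpha_i\}\subset\Gamma$ and $\mathcal{A}''=\{\overline{\alpha_j}\mid j\ne i\}\subset\Gamma/\langle\alpha_i\rangle$, both lists indexed by $[n]\smallsetminus\{i\}$ so that the variables $v_j$ ($j\neq i$) are attached to the same index. Then $$Z^G_{\mathcal{A}}(q,\boldsymbol v)=\begin{cases}Z^G_{\mathcal{A}'}(q,\boldsymbol v)+v_i\,Z^G_{\mathcal{A}''}(q,\boldsymbol v),&\text{if }\alpha_i\text{ is a loop},\\ Z^G_{\mathcal{A}'}(q,\boldsymbol v)+v_i\,q^{-1}\,Z^G_{\mathcal{A}''}(q,\boldsymbol v),&\text{otherwise.}\end{cases}$$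
   Context: An abelian group $G$ is torsion-wise finite if $G[d]=\{x\in G\mid dx=0\}$ is finite for every $d>0$. Lists are multisets with sublists distinguished by index. For a sublist $\mathcal{S}$ of a list in a finitely generated abelian group $\Gamma$, $r_{\mathcal{S}}$ is the rank of $\langle\mathcal{S}\rangle$ and the $G$-multiplicity is $m(\mathcal{S};G)=\#\mathrm{Hom}((\Gamma/\langle\mathcal{S}\rangle)_{\mathrm{tor}},G)$ (the subscript tor denotes the torsion subgroup). The multivariate $G$-Tutte polynomial is $Z^G_{\mathcal{A}}(q,v_1,\dots,v_n)=\sum_{\mathcal{S}\subset\mathcal{A}}m(\mathcal{S};G)\,q^{-r_{\mathcal{S}}}\prod_{\alpha_i\in\mathcal{S}}v_i$ (for $\mathcal{A}''$ the multiplicities and ranks are computed in $\Gamma/\langle\alpha_i\rangle$). An element $\alpha\in\mathcal{A}$ is a loop if $\alpha\in\Gamma_{\mathrm{tor}}$. *)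

theory Defs
  imports "HOL-Algebra.Algebra" Complex_Main
begin

definition torsion_set :: "('a, 'b) monoid_scheme \<Rightarrow> 'a set" where
  "torsion_set H = {x \<in> carrier H. \<exists>n::nat. n > 0 \<and> x [^]\<^bsub>H\<^esub> n = \<one>\<^bsub>H\<^esub>}"

definition torsion_group :: "('a, 'b) monoid_scheme \<Rightarrow> ('a, 'b) monoid_scheme" where
  "torsion_group H = H\<lparr>carrier := torsion_set H\<rparr>"

definition torsion_wise_finite :: "('a, 'b) monoid_scheme \<Rightarrow> bool" where
  "torsion_wise_finite G \<longleftrightarrow>
     (\<forall>d::nat. d > 0 \<longrightarrow> finite {x \<in> carrier G. x [^]\<^bsub>G\<^esub> d = \<one>\<^bsub>G\<^esub>})"

definition finitely_generated_group :: "('a, 'b) monoid_scheme \<Rightarrow> bool" where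
  "finitely_generated_group H \<longleftrightarrow>
     (\<exists>S. finite S \<and> S \<subseteq> carrier H \<and> generate H S = carrier H)"

(* #Hom(A,B): homomorphisms are counted as functions on the carrier of A *)
definition num_hom :: "('a, 'b) monoid_scheme \<Rightarrow> ('c, 'd) monoid_scheme \<Rightarrow> nat" where
  "num_hom A B = card ((\<lambda>h. restrict h (carrier A)) ` hom A B)"

definition lin_indep :: "('a, 'b) monoid_scheme \<Rightarrow> 'a set \<Rightarrow> bool" where
  "lin_indep H Xs \<longleftrightarrow> finite Xs \<and> Xs \<subseteq> carrier H \<and>
     (\<forall>c :: 'a \<Rightarrow> int. finprod H (\<lambda>x. x [^]\<^bsub>H\<^esub> (c x)) Xs = \<one>\<^bsub>H\<^esub> \<longrightarrow> (\<forall>x\<in>Xs. c x = 0))"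

definition ab_rank :: "('a, 'b) monoid_scheme \<Rightarrow> nat" where
  "ab_rank H = Max {card Xs | Xs. lin_indep H Xs}"

definition gen_rank :: "('a, 'b) monoid_scheme \<Rightarrow> 'a set \<Rightarrow> nat" where
  "gen_rank Gam Xs = ab_rank (Gam\<lparr>carrier := generate Gam Xs\<rparr>)"

definition G_mult :: "('a, 'b) monoid_scheme \<Rightarrow> ('c, 'd) monoid_scheme \<Rightarrow> 'a set \<Rightarrow> nat" where
  "G_mult Gam G Xs = num_hom (torsion_group (Gam Mod generate Gam Xs)) G"

definition is_loop :: "('a, 'b) monoid_scheme \<Rightarrow> 'a \<Rightarrow> bool" where
  "is_loop Gam a \<longleftrightarrow> a \<in> torsion_set Gam"

(* Multivariate G-Tutte polynomial of the list (A j)_{j \<in> I} in Gam, evaluated at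
   q and v = (v_j); sublists are subsets of the index set I. *)
definition tutteZ :: "('a, 'b) monoid_scheme \<Rightarrow> ('c, 'd) monoid_scheme \<Rightarrow> (nat \<Rightarrow> 'a) \<Rightarrow> nat set
                      \<Rightarrow> real \<Rightarrow> (nat \<Rightarrow> real) \<Rightarrow> real" where
  "tutteZ Gam G A I q v =
     (\<Sum>S\<in>Pow I. real (G_mult Gam G (A ` S)) * (inverse q) ^ gen_rank Gam (A ` S) * (\<Prod>j\<in>S. v j))"

end

theory Submission
  imports Defs
begin

definition combo :: "('a,'b) monoid_scheme \<Rightarrow> ('a \<Rightarrow> int) \<Rightarrow> 'a set \<Rightarrow> 'a" where
  "combo H c Y = finprod H (\<lambda>x. pow H x (c x)) Y"

definition LI :: "('a,'b) monoid_scheme \<Rightarrow> 'a set \<Rightarrow> 'a set \<Rightarrow> bool" where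
  "LI H N Y \<longleftrightarrow> finite Y \<and> Y \<subseteq> carrier H \<and> (\<forall>c. combo H c Y \<in> N \<longrightarrow> (\<forall>x\<in>Y. c x = 0))"

context comm_group begin

lemma combo_closed[simp]: "Y \<subseteq> carrier G \<Longrightarrow> combo G c Y \<in> carrier G"
  unfolding combo_def by (intro finprod_closed) auto

lemma combo_mult: "Y \<subseteq> carrier G \<Longrightarrow> combo G c Y \<otimes> combo G d Y = combo G (\<lambda>x. c x + d x) Y"
proof -
  assume Y: "Y \<subseteq> carrier G"
  have "combo G (\<lambda>x. c x + d x) Y = finprod G (\<lambda>x. x [^] c x \<otimes> x [^] d x) Y"
    unfolding combo_def using Y by (intro finprod_cong') (auto simp: int_pow_mult subset_iff)
  also have "\<dots> = combo G c Y \<otimes> combo G d Y"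
    unfolding combo_def using Y by (subst finprod_multf) (auto simp: subset_iff)
  finally show ?thesis by simp
qed

lemma combo_cong: "(\<And>x. x \<in> Y \<Longrightarrow> c x = d x) \<Longrightarrow> Y \<subseteq> carrier G \<Longrightarrow> combo G c Y = combo G d Y"
  unfolding combo_def by (auto intro!: finprod_cong' simp: subset_iff)

lemma combo_zero: "combo G (\<lambda>_. 0) Y = \<one>"
  unfolding combo_def by (rule finprod_one_eqI) simp

lemma combo_insert: "finite Y \<Longrightarrow> x \<notin> Y \<Longrightarrow> insert x Y \<subseteq> carrier G \<Longrightarrow>
   combo G c (insert x Y) = x [^] c x \<otimes> combo G c Y"
  unfolding combo_def by (subst finprod_insert) (auto simp: subset_iff)

lemma combo_pow: "finite Y \<Longrightarrow> Y \<subseteq> carrier G \<Longrightarrow> combo G c Y [^] (k::int) = combo G (\<lambda>x. k * c x) Y"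
proof (induction Y rule: finite_induct)
  case empty then show ?case by (simp add: combo_def)
next
  case (insert x F)
  then show ?case
    by (simp add: combo_insert int_pow_distrib int_pow_pow mult.commute)
qed

lemma combo_diff: "Y \<subseteq> carrier G \<Longrightarrow> combo G c Y = combo G d Y \<Longrightarrow> combo G (\<lambda>x. c x - d x) Y = \<one>"
proof -
  assume Y: "Y \<subseteq> carrier G" and e: "combo G c Y = combo G d Y"
  have "combo G (\<lambda>x. c x - d x) Y = combo G (\<lambda>x. d x + (- d x)) Y \<otimes> combo G (\<lambda>x. c x - d x) Y"
    using Y by (simp add: combo_zero)
  also have "\<dots> = combo G d Y \<otimes> combo G (\<lambda>x. - d x) Y \<otimes> combo G (\<lambda>x. c x - d x) Y"
    using Y by (simp add: combo_mult)
  also have "\<dots> = combo G d Y \<otimes> (combo G (\<lambda>x. c x - d x) Y \<otimes> combo G (\<lambda>x. - d x) Y)"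
    using Y by (simp add: m_ac)
  also have "\<dots> = combo G c Y \<otimes> combo G (\<lambda>x. - d x) Y"
    using Y by (simp only: combo_mult m_assoc[symmetric] combo_closed) (simp add: algebra_simps)
  also have "\<dots> = combo G d Y \<otimes> combo G (\<lambda>x. - d x) Y" using e by simp
  also have "\<dots> = combo G (\<lambda>x. d x + - d x) Y" using Y by (simp only: combo_mult)
  also have "\<dots> = \<one>" using Y by (simp add: combo_zero)
  finally show ?thesis .
qed

end

definition sg :: "('a,'b) monoid_scheme \<Rightarrow> 'a set \<Rightarrow> 'a \<Rightarrow> 'a set" where
  "sg H N g = {y. \<exists>n\<in>N. \<exists>e::int. y = n \<otimes>\<^bsub>H\<^esub> pow H g e}"

context comm_group begin

lemma combo_ext: "finite Y \<Longrightarrow> Z \<subseteq> Y \<Longrightarrow> Y \<subseteq> carrier G \<Longrightarrow>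
   combo G (\<lambda>x. if x \<in> Z then c x else 0) Y = combo G c Z"
  unfolding combo_def
  by (rule finprod_mono_neutral_cong_right) (auto simp: subset_iff)

lemma LI_subset: assumes L: "LI G N Y" and Z: "Z \<subseteq> Y" shows "LI G N Z"
proof -
  have fY: "finite Y" and cY: "Y \<subseteq> carrier G" and h: "\<And>c. combo G c Y \<in> N \<Longrightarrow> \<forall>x\<in>Y. c x = 0"
    using L unfolding LI_def by auto
  have "\<forall>x\<in>Z. c x = 0" if c: "combo G c Z \<in> N" for c
  proof
    fix x assume x: "x \<in> Z"
    have "combo G (\<lambda>x. if x \<in> Z then c x else 0) Y \<in> N" using combo_ext[OF fY Z cY, of c] c by simp
    then have "(\<lambda>x. if x \<in> Z then c x else 0) x = 0" using h x Z by blast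
    then show "c x = 0" using x by simp
  qed
  moreover have "finite Z" using fY Z finite_subset by blast
  ultimately show ?thesis unfolding LI_def using Z cY by blast
qed

lemma LI_empty: "LI G N {}"
  unfolding LI_def by blast

lemma LI_one: "subgroup N G \<Longrightarrow> LI G N Y \<Longrightarrow> LI G {\<one>} Y"
proof -
  assume N: "subgroup N G" and L: "LI G N Y"
  have "\<one> \<in> N" using subgroup.one_closed[OF N] .
  then have "{\<one>} \<subseteq> N" by blast
  then show ?thesis using L unfolding LI_def by blast
qed

lemma gen_sub:
  assumes N: "subgroup N G" and g: "g \<in> carrier G"
  shows "generate G (N \<union> {g}) \<subseteq> sg G N g"
proof (rule generate_subgroup_incl)
  have Nc: "N \<subseteq> carrier G" using N subgroup.subset by blast
  show "N \<union> {g} \<subseteq> sg G N g"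
  proof
    fix x assume "x \<in> N \<union> {g}"
    then show "x \<in> sg G N g"
    proof
      assume "x \<in> N" then have "x = x \<otimes> g [^] (0::int)" using Nc g by auto
      then show ?thesis using \<open>x \<in> N\<close> unfolding sg_def by blast
    next
      assume "x \<in> {g}" then have "x = \<one> \<otimes> g [^] (1::int)" using g by auto
      then show ?thesis using subgroup.one_closed[OF N] unfolding sg_def by blast
    qed
  qed
  show "subgroup (sg G N g) G"
  proof
    show "sg G N g \<subseteq> carrier G"
      using Nc g unfolding sg_def by auto
    show "\<one> \<in> sg G N g"
    proof -
      have "\<one> = \<one> \<otimes> g [^] (0::int)" using g by simp
      then show ?thesis using subgroup.one_closed[OF N] unfolding sg_def by blast
    qed
    fix x y assume x: "x \<in> sg G N g"
      and y: "y \<in> sg G N g"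
    obtain n1 and e1::int where 1: "x = n1 \<otimes> g [^] e1" "n1 \<in> N" using x unfolding sg_def by blast
    obtain n2 and e2::int where 2: "y = n2 \<otimes> g [^] e2" "n2 \<in> N" using y unfolding sg_def by blast
    have n1: "n1 \<in> carrier G" and n2: "n2 \<in> carrier G" using 1 2 Nc by auto
    have "x \<otimes> y = (n1 \<otimes> n2) \<otimes> g [^] (e1 + e2)"
      using 1 2 n1 n2 g by (simp add: int_pow_mult m_ac)
    moreover have "n1 \<otimes> n2 \<in> N" using 1 2 subgroup.m_closed[OF N] by blast
    ultimately show "x \<otimes> y \<in> sg G N g" unfolding sg_def by blast
  next
    fix x assume x: "x \<in> sg G N g"
    obtain n1 and e1::int where 1: "x = n1 \<otimes> g [^] e1" "n1 \<in> N" using x unfolding sg_def by blast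
    have n1: "n1 \<in> carrier G" using 1 Nc by auto
    have "inv x = inv n1 \<otimes> g [^] (- e1)"
      using 1 n1 g by (simp add: int_pow_neg inv_mult m_comm)
    moreover have "inv n1 \<in> N" using 1 subgroup.m_inv_closed[OF N] by blast
    ultimately show "inv x \<in> sg G N g" unfolding sg_def by blast
  qed
qed

lemma torsion_step:
  assumes N: "subgroup N G" and g: "g \<in> carrier G" and k: "k \<noteq> (0::int)" and gk: "g [^] k \<in> N"
    and N': "N' \<subseteq> sg G N g"
    and L: "LI G N Y"
  shows "LI G N' Y"
  unfolding LI_def
proof (intro conjI allI impI ballI)
  show "finite Y" "Y \<subseteq> carrier G" using L unfolding LI_def by auto
  fix c x assume c: "combo G c Y \<in> N'" and x: "x \<in> Y"
  obtain n and e::int where ne: "combo G c Y = n \<otimes> g [^] e" "n \<in> N" using c N' unfolding sg_def by blast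
  have Nc: "N \<subseteq> carrier G" using N subgroup.subset by blast
  have c1: "combo G (\<lambda>x. k * c x) Y = (n \<otimes> g [^] e) [^] k"
    using combo_pow[of Y c k] ne \<open>finite Y\<close> \<open>Y \<subseteq> carrier G\<close> by simp
  have n: "n \<in> carrier G" using ne Nc by auto
  have "(n \<otimes> g [^] e) [^] k = n [^] k \<otimes> (g [^] k) [^] e"
    using n g by (simp add: int_pow_distrib int_pow_pow mult.commute)
  moreover have "n [^] k \<otimes> (g [^] k) [^] e \<in> N"
    using ne gk N by (simp add: subgroup.m_closed subgroup_int_pow_closed)
  ultimately have "combo G (\<lambda>x. k * c x) Y \<in> N" using c1 by simp
  then have "k * c x = 0" using L x unfolding LI_def by blast
  then show "c x = 0" using k by simp
qed

lemma exchange: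
  assumes N: "subgroup N G" and g: "g \<in> carrier G" and nt: "\<And>k::int. k \<noteq> 0 \<Longrightarrow> g [^] k \<notin> N"
    and N': "N' \<subseteq> sg G N g"
    and L: "LI G N Y" and nL: "\<not> LI G N' Y"
  shows "\<exists>x0\<in>Y. LI G N' (Y - {x0})"
proof -
  have fY: "finite Y" and cY: "Y \<subseteq> carrier G" using L unfolding LI_def by auto
  have Nc: "N \<subseteq> carrier G" using N subgroup.subset by blast
  obtain c x0 where c: "combo G c Y \<in> N'" and x0: "x0 \<in> Y" "c x0 \<noteq> 0"
    using nL fY cY unfolding LI_def by blast
  obtain n and e::int where ne: "combo G c Y = n \<otimes> g [^] e" "n \<in> N" using c N' unfolding sg_def by blast
  have n: "n \<in> carrier G" using ne Nc by auto
  have e0: "e \<noteq> 0"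
  proof
    assume "e = 0"
    then have "combo G c Y \<in> N" using ne n by simp
    then show False using L x0 unfolding LI_def by blast
  qed
  have "LI G N' (Y - {x0})"
    unfolding LI_def
  proof (intro conjI allI impI ballI)
    show "finite (Y - {x0})" "Y - {x0} \<subseteq> carrier G" using fY cY by auto
    fix d x assume d: "combo G d (Y - {x0}) \<in> N'" and x: "x \<in> Y - {x0}"
    obtain n' and f::int where nf: "combo G d (Y - {x0}) = n' \<otimes> g [^] f" "n' \<in> N" using d N' unfolding sg_def by blast
    have n': "n' \<in> carrier G" using nf Nc by auto
    define d' where "d' = (\<lambda>x. if x \<in> Y - {x0} then d x else 0)"
    have d'Y: "combo G d' Y = n' \<otimes> g [^] f"
      using combo_ext[of Y "Y - {x0}" d] fY cY nf unfolding d'_def by auto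
    have A: "combo G (\<lambda>x. e * d' x) Y = n' [^] e \<otimes> g [^] (f * e)"
      using combo_pow[OF fY cY, of d' e] d'Y n' g by (simp add: int_pow_distrib int_pow_pow)
    have B: "combo G (\<lambda>x. (- f) * c x) Y = n [^] (- f) \<otimes> g [^] (- (f * e))"
      using combo_pow[OF fY cY, of c "- f"] ne n g by (simp add: int_pow_distrib int_pow_pow mult.commute)
    have "combo G (\<lambda>x. e * d' x + (- f) * c x) Y = combo G (\<lambda>x. e * d' x) Y \<otimes> combo G (\<lambda>x. (- f) * c x) Y"
      using combo_mult[OF cY] by simp
    also have "\<dots> = n' [^] e \<otimes> n [^] (- f) \<otimes> (g [^] (f * e) \<otimes> g [^] (- (f * e)))"
      using A B n n' g by (simp add: m_ac)
    also have "\<dots> = n' [^] e \<otimes> n [^] (- f)"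
      using n n' g by (simp add: int_pow_mult[symmetric])
    also have "\<dots> \<in> N"
      using nf ne N by (simp add: subgroup.m_closed subgroup_int_pow_closed)
    finally have "combo G (\<lambda>x. e * d' x + (- f) * c x) Y \<in> N" .
    then have z: "\<And>y. y \<in> Y \<Longrightarrow> e * d' y + (- f) * c y = 0" using L unfolding LI_def by blast
    have "f * c x0 = 0" using z[OF x0(1)] unfolding d'_def by simp
    then have "f = 0" using x0 by simp
    then have "e * d x = 0" using z[of x] x unfolding d'_def by simp
    then show "d x = 0" using e0 by simp
  qed
  then show ?thesis using x0 by blast
qed

end

definition KS :: "('a,'b) monoid_scheme \<Rightarrow> 'a set \<Rightarrow> 'a set \<Rightarrow> nat set" where
  "KS H N M = {card Y | Y. Y \<subseteq> M \<and> LI H N Y}"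

context comm_group begin

lemma LI_bound:
  assumes "finite F" "F \<subseteq> carrier G" "subgroup N G" "generate G (N \<union> F) = carrier G" "LI G N Y"
  shows "card Y \<le> card F"
  using assms
proof (induction F arbitrary: N Y rule: finite_induct)
  case empty
  have Nc: "N \<subseteq> carrier G" using empty subgroup.subset by blast
  have "generate G N \<subseteq> N" using generate_subgroup_incl[of N N] empty by blast
  then have CN: "carrier G = N" using empty Nc by auto
  have fY: "finite Y" and cY: "Y \<subseteq> carrier G" using empty unfolding LI_def by auto
  have "combo G (\<lambda>_. 1) Y \<in> N" using combo_closed[OF cY] CN by blast
  then have "\<forall>x\<in>Y. (1::int) = 0" using empty unfolding LI_def by blast
  then have "Y = {}" by auto
  then show ?case by simp
next
  case (insert g F)
  have Nc: "N \<subseteq> carrier G" using insert subgroup.subset by blast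
  have g: "g \<in> carrier G" using insert by auto
  define N' where "N' = generate G (N \<union> {g})"
  have N'sub: "subgroup N' G" unfolding N'_def using generate_is_subgroup Nc g by auto
  have N'sg: "N' \<subseteq> sg G N g" unfolding N'_def using gen_sub[OF insert(5) g] .
  have "generate G (N' \<union> F) = carrier G"
  proof
    show "generate G (N' \<union> F) \<subseteq> carrier G"
    proof (rule generate_incl)
      show "N' \<union> F \<subseteq> carrier G" using subgroup.subset[OF N'sub] insert(4) by blast
    qed
    have "N \<union> {g} \<subseteq> N'" unfolding N'_def using generate.incl[of _ "N \<union> {g}" G] by blast
    then have "N \<union> insert g F \<subseteq> N' \<union> F" by blast
    then have "generate G (N \<union> insert g F) \<subseteq> generate G (N' \<union> F)" by (rule mono_generate)
    then show "carrier G \<subseteq> generate G (N' \<union> F)" using insert(6) by simp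
  qed
  then have IH: "\<And>Z. LI G N' Z \<Longrightarrow> card Z \<le> card F"
    using insert N'sub by blast
  have cF: "card (insert g F) = Suc (card F)" using insert by simp
  show ?case
  proof (cases "\<exists>k::int. k \<noteq> 0 \<and> g [^] k \<in> N")
    case True
    then obtain k::int where "k \<noteq> 0" "g [^] k \<in> N" by blast
    then have "LI G N' Y" using torsion_step[OF insert(5) g _ _ N'sg insert(7)] by blast
    then show ?thesis using IH cF by fastforce
  next
    case False
    show ?thesis
    proof (cases "LI G N' Y")
      case True then show ?thesis using IH cF by fastforce
    next
      case nL: False
      obtain x0 where x0: "x0 \<in> Y" "LI G N' (Y - {x0})"
        using exchange[OF insert(5) g _ N'sg insert(7) nL] False by blast
      have "card (Y - {x0}) \<le> card F" using IH x0 by blast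
      moreover have "finite Y" using insert(7) unfolding LI_def by blast
      ultimately show ?thesis using x0 cF by (simp add: card_Diff_singleton_if)
    qed
  qed
qed

lemma KS_finite:
  assumes F: "finite F" "F \<subseteq> carrier G" "generate G F = carrier G" and N: "subgroup N G"
  shows "finite (KS G N M)"
proof -
  have gen: "generate G ({\<one>} \<union> F) = carrier G"
  proof
    show "generate G ({\<one>} \<union> F) \<subseteq> carrier G" using generate_incl F by auto
    show "carrier G \<subseteq> generate G ({\<one>} \<union> F)" using mono_generate[of F "{\<one>} \<union> F"] F by auto
  qed
  have "KS G N M \<subseteq> {..card F}"
  proof
    fix k assume "k \<in> KS G N M"
    then obtain Y where Y: "k = card Y" "LI G N Y" unfolding KS_def by blast
    then have "LI G {\<one>} Y" using LI_one N by blast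
    then have "card Y \<le> card F" using LI_bound[OF F(1,2) triv_subgroup gen] by blast
    then show "k \<in> {..card F}" using Y by simp
  qed
  then show ?thesis using finite_subset by blast
qed

lemma KS_zero: "0 \<in> KS G N M"
proof -
  have "0 = card ({}::'a set) \<and> {} \<subseteq> M \<and> LI G N {}" using LI_empty by simp
  then show ?thesis unfolding KS_def by blast
qed

lemma KS_torsion:
  assumes a: "a \<in> carrier G" and k: "(k::nat) > 0" "a [^] k = \<one>"
  shows "KS G {\<one>} M = KS G (generate G {a}) M"
proof -
  have sub: "generate G {a} \<subseteq> sg G {\<one>} a"
    using mono_generate[of "{a}" "{\<one>} \<union> {a}"] gen_sub[OF triv_subgroup a] by blast
  have "a [^] (int k) \<in> {\<one>}" using k by (simp add: int_pow_int)
  moreover have "int k \<noteq> 0" using k by simp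
  moreover have gs: "subgroup (generate G {a}) G" using generate_is_subgroup[of "{a}"] a by blast
  ultimately have eq: "LI G {\<one>} Y \<longleftrightarrow> LI G (generate G {a}) Y" for Y
  proof -
    assume h: "a [^] int k \<in> {\<one>}" "int k \<noteq> 0"
    show ?thesis
    proof
      assume "LI G {\<one>} Y" then show "LI G (generate G {a}) Y"
        using torsion_step[OF triv_subgroup a h(2) h(1) sub] by blast
    next
      assume "LI G (generate G {a}) Y" then show "LI G {\<one>} Y" using LI_one[OF gs] by blast
    qed
  qed
  show ?thesis unfolding KS_def by (simp only: eq)
qed

lemma nontors_int:
  assumes a: "a \<in> carrier G" and nt: "\<And>k::nat. k > 0 \<Longrightarrow> a [^] k \<noteq> \<one>"
    and k: "(k::int) \<noteq> 0"
  shows "a [^] k \<notin> {\<one>}"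
proof (cases "k < 0")
  case True
  define m where "m = nat (- k)"
  have km: "k = - int m" using True unfolding m_def by simp
  have m0: "m > 0" using True unfolding m_def by simp
  have "a [^] k = inv (a [^] m)" unfolding km using a by (simp add: int_pow_neg int_pow_int)
  moreover have "a [^] m \<noteq> \<one>" using nt m0 by blast
  moreover have "a [^] m \<in> carrier G" using a by simp
  ultimately show ?thesis by simp
next
  case False
  define m where "m = nat k"
  have km: "k = int m" using False unfolding m_def by simp
  have m0: "m > 0" using False k unfolding m_def by simp
  have "a [^] k = a [^] m" unfolding km by (simp add: int_pow_int)
  moreover have "a [^] m \<noteq> \<one>" using nt m0 by blast
  ultimately show ?thesis by simp
qed

lemma KS_nontorsion:
  assumes M: "subgroup M G" and aM: "a \<in> M" and nt: "\<And>k::nat. k > 0 \<Longrightarrow> a [^] k \<noteq> \<one>"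
  shows "KS G {\<one>} M = insert 0 (Suc ` KS G (generate G {a}) M)"
proof -
  have a: "a \<in> carrier G" using M aM subgroup.subset by blast
  define N where "N = generate G {a}"
  have Nsub: "subgroup N G" unfolding N_def using generate_is_subgroup a by auto
  have Npow: "N = {a [^] (k :: int) | k. k \<in> UNIV}" unfolding N_def using generate_pow[OF a] .
  have sub: "N \<subseteq> sg G {\<one>} a"
    unfolding N_def using mono_generate[of "{a}" "{\<one>} \<union> {a}"] gen_sub[OF triv_subgroup a] by blast
  have nti: "\<And>k::int. k \<noteq> 0 \<Longrightarrow> a [^] k \<notin> {\<one>}" using nontors_int[OF a nt] by blast
  show ?thesis unfolding N_def[symmetric]
  proof
    show "KS G {\<one>} M \<subseteq> insert 0 (Suc ` KS G N M)"
    proof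
      fix m assume "m \<in> KS G {\<one>} M"
      then obtain Y where Y: "m = card Y" "Y \<subseteq> M" "LI G {\<one>} Y" unfolding KS_def by blast
      have fY: "finite Y" and cY: "Y \<subseteq> carrier G" using Y unfolding LI_def by auto
      show "m \<in> insert 0 (Suc ` KS G N M)"
      proof (cases "Y = {}")
        case True then show ?thesis using Y by simp
      next
        case Yne: False
        have "\<exists>x0\<in>Y. LI G N (Y - {x0})"
        proof (cases "a \<in> Y")
          case True
          have "LI G N (Y - {a})"
            unfolding LI_def
          proof (intro conjI allI impI ballI)
            show "finite (Y - {a})" "Y - {a} \<subseteq> carrier G" using fY cY by auto
            fix c x assume c: "combo G c (Y - {a}) \<in> N" and x: "x \<in> Y - {a}"
            obtain e::int where e: "combo G c (Y - {a}) = a [^] e" using c Npow by blast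
            define c' where "c' = (\<lambda>y. if y \<in> Y - {a} then c y else - e)"
            have "combo G c' Y = combo G c' (insert a (Y - {a}))" using True by (simp add: insert_absorb)
            also have "\<dots> = a [^] (- e) \<otimes> combo G c' (Y - {a})"
              using combo_insert[of "Y - {a}" a c'] fY cY True unfolding c'_def by auto
            also have "combo G c' (Y - {a}) = combo G c (Y - {a})"
              using combo_cong[of "Y - {a}" c' c] cY unfolding c'_def by auto
            also have "a [^] (- e) \<otimes> combo G c (Y - {a}) = \<one>"
              using e a by (simp add: int_pow_mult[symmetric])
            finally have "combo G c' Y \<in> {\<one>}" by simp
            then have "c' x = 0" using Y(3) x unfolding LI_def by blast
            then show "c x = 0" using x unfolding c'_def by simp
          qed
          then show ?thesis using True by blast
        next
          case False
          show ?thesis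
          proof (cases "LI G N Y")
            case True
            then show ?thesis using LI_subset Yne by blast
          next
            case nL: False
            show ?thesis using exchange[OF triv_subgroup a nti sub Y(3) nL] .
          qed
        qed
        then obtain x0 where x0: "x0 \<in> Y" "LI G N (Y - {x0})" by blast
        have "card (Y - {x0}) \<in> KS G N M" unfolding KS_def using x0 Y by blast
        moreover have "m = Suc (card (Y - {x0}))" using Y x0 fY
          by (metis card_Suc_Diff1)
        ultimately show ?thesis by blast
      qed
    qed
    show "insert 0 (Suc ` KS G N M) \<subseteq> KS G {\<one>} M"
    proof
      fix m assume m: "m \<in> insert 0 (Suc ` KS G N M)"
      show "m \<in> KS G {\<one>} M"
      proof (cases "m = 0")
        case True then show ?thesis using KS_zero by simp
      next
        case False
        then obtain Y where Y: "m = Suc (card Y)" "Y \<subseteq> M" "LI G N Y" using m unfolding KS_def by blast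
        have fY: "finite Y" and cY: "Y \<subseteq> carrier G" using Y unfolding LI_def by auto
        have aY: "a \<notin> Y"
        proof
          assume aY: "a \<in> Y"
          define c where "c = (\<lambda>y. if y \<in> {a} then (1::int) else 0)"
          have "combo G c Y = combo G (\<lambda>y. 1) {a}" unfolding c_def using combo_ext[OF fY _ cY, of "{a}" "\<lambda>y. 1"] aY by simp
          also have "\<dots> = a" using a combo_insert[of "{}" a "\<lambda>y. 1"] by (simp add: combo_def)
          finally have "combo G c Y \<in> N" unfolding N_def using generate.incl[of a "{a}" G] by simp
          then have "c a = 0" using Y(3) aY unfolding LI_def by blast
          then show False unfolding c_def by simp
        qed
        have "LI G {\<one>} (insert a Y)"
          unfolding LI_def
        proof (intro conjI allI impI ballI)
          show "finite (insert a Y)" "insert a Y \<subseteq> carrier G" using fY cY a by auto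
          fix c x assume c: "combo G c (insert a Y) \<in> {\<one>}" and x: "x \<in> insert a Y"
          have eq: "a [^] c a \<otimes> combo G c Y = \<one>" using c combo_insert[OF fY aY, of c] cY a by simp
          then have "combo G c Y = inv (a [^] c a)" using a cY by (metis combo_closed inv_equality int_pow_closed m_comm)
          also have "\<dots> = a [^] (- c a)" using a by (simp add: int_pow_neg)
          finally have "combo G c Y \<in> N" using Npow by blast
          then have cz: "\<forall>y\<in>Y. c y = 0" using Y(3) unfolding LI_def by blast
          then have "combo G c Y = \<one>" using combo_cong[of Y c "\<lambda>_. 0"] cY combo_zero by simp
          then have "a [^] c a = \<one>" using eq a by simp
          then have "c a = 0" using nti by blast
          then show "c x = 0" using x cz by auto
        qed
        moreover have "m = card (insert a Y)" using Y fY aY by simp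
        moreover have "insert a Y \<subseteq> M" using Y aM by simp
        ultimately show ?thesis unfolding KS_def by blast
      qed
    qed
  qed
qed

end

lemma Max_Suc_KS: "finite K \<Longrightarrow> (0::nat) \<in> K \<Longrightarrow> Max (insert 0 (Suc ` K)) = Suc (Max K)"
proof -
  assume K: "finite K" "0 \<in> K"
  have Kne: "K \<noteq> {}" using K by blast
  have "mono Suc" by (simp add: mono_def)
  then have "Max (Suc ` K) = Suc (Max K)" using mono_Max_commute[of Suc K] K Kne by simp
  then show ?thesis using K by (subst Max_insert) auto
qed

context comm_group begin

lemma sub_comm_group: "subgroup M G \<Longrightarrow> comm_group (G\<lparr>carrier := M\<rparr>)"
  by (rule group.group_comm_groupI[OF subgroup_imp_group]) (auto simp: m_comm subgroup.mem_carrier)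

lemma finprod_sub:
  assumes M: "subgroup M G" and fY: "finite Y" and f: "f \<in> Y \<rightarrow> M"
  shows "finprod (G\<lparr>carrier := M\<rparr>) f Y = finprod G f Y"
  using fY f
proof (induction Y rule: finite_induct)
  case empty
  then show ?case using subgroup.one_closed[OF M] by (simp add: finprod_def foldD_empty)
next
  case (insert x F)
  interpret S: comm_group "G\<lparr>carrier := M\<rparr>" using sub_comm_group[OF M] .
  have fF: "f \<in> F \<rightarrow> M" and fx: "f x \<in> M" using insert by auto
  have fFc: "f \<in> F \<rightarrow> carrier G" and fxc: "f x \<in> carrier G" using fF fx subgroup.subset[OF M] by auto
  have "finprod (G\<lparr>carrier := M\<rparr>) f (insert x F) = f x \<otimes>\<^bsub>G\<lparr>carrier := M\<rparr>\<^esub> finprod (G\<lparr>carrier := M\<rparr>) f F"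
    using S.finprod_insert[of F x f] insert fF fx by simp
  also have "\<dots> = f x \<otimes> finprod G f F" using insert fF by simp
  also have "\<dots> = finprod G f (insert x F)" using finprod_insert[of F x f] insert fFc fxc by simp
  finally show ?case .
qed

lemma combo_sub:
  assumes M: "subgroup M G" and fY: "finite Y" and Y: "Y \<subseteq> M"
  shows "combo (G\<lparr>carrier := M\<rparr>) c Y = combo G c Y"
proof -
  have cl: "x [^]\<^bsub>G\<lparr>carrier := M\<rparr>\<^esub> (k::int) \<in> M" if "x \<in> M" for x k
  proof -
    have "x [^] k \<in> M" using subgroup_int_pow_closed[OF M that] by blast
    then show ?thesis using int_pow_consistent[OF M that, of k] by simp
  qed
  have "combo (G\<lparr>carrier := M\<rparr>) c Y = finprod (G\<lparr>carrier := M\<rparr>) (\<lambda>x. x [^] c x) Y"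
    unfolding combo_def using Y int_pow_consistent[OF M]
    by (intro comm_monoid.finprod_cong' comm_group.axioms(1)[OF sub_comm_group[OF M]])
       (auto simp: subset_iff subgroup_int_pow_closed[OF M] cl)
  also have "\<dots> = combo G c Y" unfolding combo_def
    using finprod_sub[OF M fY] Y by (auto simp: subset_iff subgroup_int_pow_closed[OF M])
  finally show ?thesis .
qed

lemma lin_indep_sub:
  assumes M: "subgroup M G"
  shows "lin_indep (G\<lparr>carrier := M\<rparr>) Y \<longleftrightarrow> Y \<subseteq> M \<and> LI G {\<one>} Y"
proof -
  have "finite Y \<Longrightarrow> Y \<subseteq> M \<Longrightarrow> finprod (G\<lparr>carrier := M\<rparr>) (\<lambda>x. x [^]\<^bsub>G\<lparr>carrier := M\<rparr>\<^esub> c x) Y = combo G c Y" for c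
    using combo_sub[OF M, of Y c] unfolding combo_def by simp
  moreover have "M \<subseteq> carrier G" using subgroup.subset[OF M] .
  ultimately show ?thesis unfolding lin_indep_def LI_def by auto
qed

lemma ab_rank_sub:
  assumes M: "subgroup M G"
  shows "ab_rank (G\<lparr>carrier := M\<rparr>) = Max (KS G {\<one>} M)"
  unfolding ab_rank_def KS_def lin_indep_sub[OF M] by simp

end

lemma hom_finprod:
  assumes G: "comm_group G" and H: "comm_group H" and h: "h \<in> hom G H"
    and fA: "finite A" and f: "f \<in> A \<rightarrow> carrier G"
  shows "h (finprod G f A) = finprod H (h \<circ> f) A"
proof -
  interpret G: comm_group G by fact
  interpret H: comm_group H by fact
  have gh: "group_hom G H h" using h by (simp add: group_hom_def group_hom_axioms_def G.is_group H.is_group)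
  show ?thesis
  using fA f
proof (induction A rule: finite_induct)
  case empty
  then show ?case using group_hom.hom_one[OF gh] by simp
next
  case (insert x F)
  have fF: "f \<in> F \<rightarrow> carrier G" and fx: "f x \<in> carrier G" using insert by auto
  have hF: "h \<circ> f \<in> F \<rightarrow> carrier H" and hx: "h (f x) \<in> carrier H" using fF fx h unfolding hom_def by auto
  have "h (finprod G f (insert x F)) = h (f x \<otimes>\<^bsub>G\<^esub> finprod G f F)" using insert fF fx by simp
  also have "\<dots> = h (f x) \<otimes>\<^bsub>H\<^esub> h (finprod G f F)" using h fx fF unfolding hom_def by simp
  also have "\<dots> = finprod H (h \<circ> f) (insert x F)"
    using H.finprod_insert[of F x "h \<circ> f"] insert hF hx by (simp add: comp_def)
  finally show ?case .
qed
qed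

lemma combo_hom:
  assumes G: "comm_group G" and H: "comm_group H" and h: "h \<in> hom G H"
    and fA: "finite A" and A: "A \<subseteq> carrier G" and inj: "inj_on h A"
  shows "combo H d (h ` A) = h (combo G (d \<circ> h) A)"
proof -
  interpret G: comm_group G by fact
  interpret H: comm_group H by fact
  have hA: "h ` A \<subseteq> carrier H" using A h unfolding hom_def by auto
  have "combo H d (h ` A) = finprod H (\<lambda>x. h x [^]\<^bsub>H\<^esub> d (h x)) A"
    unfolding combo_def using hA inj by (subst H.finprod_reindex) auto
  also have "\<dots> = finprod H (h \<circ> (\<lambda>x. x [^]\<^bsub>G\<^esub> d (h x))) A"
  proof (intro H.finprod_cong')
    have hp: "h (x [^]\<^bsub>G\<^esub> (k::int)) = h x [^]\<^bsub>H\<^esub> k" if "x \<in> carrier G" for x k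
      using hom_int_pow[OF h that G.is_group H.is_group] .
    show "\<And>i. i \<in> A \<Longrightarrow> h i [^]\<^bsub>H\<^esub> d (h i) = (h \<circ> (\<lambda>x. x [^]\<^bsub>G\<^esub> d (h x))) i"
      using hp A by auto
    show "h \<circ> (\<lambda>x. x [^]\<^bsub>G\<^esub> d (h x)) \<in> A \<rightarrow> carrier H"
    proof
      fix x assume "x \<in> A"
      then have "x [^]\<^bsub>G\<^esub> d (h x) \<in> carrier G" using A by auto
      then show "(h \<circ> (\<lambda>x. x [^]\<^bsub>G\<^esub> d (h x))) x \<in> carrier H" using h unfolding hom_def by auto
    qed
  qed simp
  also have "\<dots> = h (combo G (d \<circ> h) A)"
    unfolding combo_def using hom_finprod[OF G H h fA] A by (auto simp: subset_iff)
  finally show ?thesis .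
qed

context comm_group begin

lemma piN: "subgroup N G \<Longrightarrow> x \<in> carrier G \<Longrightarrow> (N #> x = N) \<longleftrightarrow> x \<in> N"
  by (metis coset_join2 rcos_self)

lemma pi_eq: "subgroup N G \<Longrightarrow> x \<in> carrier G \<Longrightarrow> y \<in> carrier G \<Longrightarrow> N #> x = N #> y \<Longrightarrow> x \<otimes> inv y \<in> N"
  by (metis rcos_self subgroup.rcos_module_imp is_group)

lemma rank_quot:
  assumes N: "subgroup N G" and M: "subgroup M G" and NM: "N \<subseteq> M"
  shows "ab_rank ((G Mod N)\<lparr>carrier := (\<lambda>x. N #> x) ` M\<rparr>) = Max (KS G N M)"
proof -
  define Q where "Q = G Mod N"
  define \<pi> where "\<pi> = (\<lambda>x. N #> x)"
  have Qc: "comm_group Q" unfolding Q_def using abelian_FactGroup[OF N] .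
  have hom: "\<pi> \<in> hom G Q" unfolding Q_def \<pi>_def using normal.r_coset_hom_Mod[OF subgroup_imp_normal[OF N]] .
  have gh: "group_hom G Q \<pi>" using hom Qc by (simp add: group_hom_def group_hom_axioms_def is_group comm_group.axioms(2))
  have M': "subgroup (\<pi> ` M) Q" using group_hom.subgroup_img_is_subgroup[OF gh M] .
  have Mc: "M \<subseteq> carrier G" using subgroup.subset[OF M] .
  have one: "\<one>\<^bsub>Q\<^esub> = N" unfolding Q_def by simp
  have "ab_rank (Q\<lparr>carrier := \<pi> ` M\<rparr>) = Max (KS Q {\<one>\<^bsub>Q\<^esub>} (\<pi> ` M))"
    using comm_group.ab_rank_sub[OF Qc M'] .
  moreover have "KS Q {\<one>\<^bsub>Q\<^esub>} (\<pi> ` M) = KS G N M"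
  proof
    show "KS Q {\<one>\<^bsub>Q\<^esub>} (\<pi> ` M) \<subseteq> KS G N M"
    proof
      fix k assume "k \<in> KS Q {\<one>\<^bsub>Q\<^esub>} (\<pi> ` M)"
      then obtain Y where Y: "k = card Y" "Y \<subseteq> \<pi> ` M" "LI Q {\<one>\<^bsub>Q\<^esub>} Y" unfolding KS_def by blast
      define r where "r = (\<lambda>y. SOME x. x \<in> M \<and> \<pi> x = y)"
      have r: "r y \<in> M \<and> \<pi> (r y) = y" if yY: "y \<in> Y" for y
      proof -
        obtain x where "x \<in> M" "\<pi> x = y" using Y(2) yY by blast
        then show ?thesis unfolding r_def using someI[of "\<lambda>x. x \<in> M \<and> \<pi> x = y" x] by blast
      qed
      define Z where "Z = r ` Y"
      have injr: "inj_on r Y" using r by (metis inj_onI)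
      have fY: "finite Y" using Y unfolding LI_def by blast
      have fZ: "finite Z" unfolding Z_def using fY by simp
      have ZM: "Z \<subseteq> M" unfolding Z_def using r by blast
      have Zc: "Z \<subseteq> carrier G" using ZM Mc by blast
      have piZ: "\<pi> ` Z = Y" unfolding Z_def using r by (force simp: image_image)
      have injpi: "inj_on \<pi> Z" unfolding Z_def using r by (smt (verit) imageE inj_onI)
      have rpi: "r (\<pi> x) = x" if "x \<in> Z" for x using that r unfolding Z_def by force
      have cZ: "card Z = k" unfolding Z_def using injr Y card_image by blast
      have "LI G N Z"
        unfolding LI_def
      proof (intro conjI allI impI ballI)
        show "finite Z" "Z \<subseteq> carrier G" using fZ Zc by auto
        fix c x assume c: "combo G c Z \<in> N" and x: "x \<in> Z"
        have "combo Q (c \<circ> r) Y = \<pi> (combo G (c \<circ> r \<circ> \<pi>) Z)"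
          using combo_hom[OF comm_group_axioms Qc hom fZ Zc injpi, of "c \<circ> r"] piZ by simp
        also have "combo G (c \<circ> r \<circ> \<pi>) Z = combo G c Z"
          using combo_cong[of Z "c \<circ> r \<circ> \<pi>" c] rpi Zc by simp
        also have "\<pi> (combo G c Z) = \<one>\<^bsub>Q\<^esub>"
          unfolding one \<pi>_def using piN[OF N] c combo_closed[OF Zc] by blast
        finally have "combo Q (c \<circ> r) Y \<in> {\<one>\<^bsub>Q\<^esub>}" by (simp add: comp_def)
        then have "(c \<circ> r) (\<pi> x) = 0" using Y(3) x piZ unfolding LI_def by blast
        then show "c x = 0" using rpi x by simp
      qed
      then show "k \<in> KS G N M" unfolding KS_def using ZM cZ by blast
    qed
    show "KS G N M \<subseteq> KS Q {\<one>\<^bsub>Q\<^esub>} (\<pi> ` M)"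
    proof
      fix k assume "k \<in> KS G N M"
      then obtain Z where Z: "k = card Z" "Z \<subseteq> M" "LI G N Z" unfolding KS_def by blast
      have fZ: "finite Z" and Zc: "Z \<subseteq> carrier G" using Z unfolding LI_def by auto
      have injpi: "inj_on \<pi> Z"
      proof (rule inj_onI, rule ccontr)
        fix x y assume x: "x \<in> Z" and y: "y \<in> Z" and e: "\<pi> x = \<pi> y" and ne: "x \<noteq> y"
        have xc: "x \<in> carrier G" and yc: "y \<in> carrier G" using x y Zc by auto
        define c where "c = (\<lambda>z. if z \<in> {x, y} then (if z = x then (1::int) else -1) else 0)"
        have "combo G c Z = combo G (\<lambda>z. if z = x then (1::int) else -1) {x, y}"
          unfolding c_def using combo_ext[OF fZ _ Zc, of "{x,y}"] x y by simp
        also have "\<dots> = x \<otimes> inv y"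
          using combo_insert[of "{y}" x] combo_insert[of "{}" y] ne xc yc
          by (simp add: combo_def int_pow_neg)
        also have "\<dots> \<in> N" using pi_eq[OF N xc yc] e unfolding \<pi>_def by simp
        finally have "c x = 0" using Z(3) x unfolding LI_def by blast
        then show False unfolding c_def by simp
      qed
      have "LI Q {\<one>\<^bsub>Q\<^esub>} (\<pi> ` Z)"
        unfolding LI_def
      proof (intro conjI allI impI ballI)
        show "finite (\<pi> ` Z)" using fZ by simp
        show "\<pi> ` Z \<subseteq> carrier Q" using hom Zc unfolding hom_def by auto
        fix d y assume d: "combo Q d (\<pi> ` Z) \<in> {\<one>\<^bsub>Q\<^esub>}" and y: "y \<in> \<pi> ` Z"
        have "\<pi> (combo G (d \<circ> \<pi>) Z) = N"
          using combo_hom[OF comm_group_axioms Qc hom fZ Zc injpi, of d] d one by simp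
        then have "combo G (d \<circ> \<pi>) Z \<in> N" unfolding \<pi>_def using piN[OF N] combo_closed[OF Zc] by blast
        then have "\<forall>x\<in>Z. (d \<circ> \<pi>) x = 0" using Z(3) unfolding LI_def by blast
        then show "d y = 0" using y by auto
      qed
      moreover have "card (\<pi> ` Z) = k" using Z injpi card_image by metis
      moreover have "\<pi> ` Z \<subseteq> \<pi> ` M" using Z by blast
      ultimately show "k \<in> KS Q {\<one>\<^bsub>Q\<^esub>} (\<pi> ` M)" unfolding KS_def by blast
    qed
  qed
  ultimately show ?thesis unfolding Q_def \<pi>_def by simp
qed

end

lemma num_hom_bij:
  fixes A :: "('a,'x) monoid_scheme" and A' :: "('b,'y) monoid_scheme" and B :: "('c,'z) monoid_scheme"
  assumes f: "f \<in> hom A A'" and g: "g \<in> hom A' A"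
    and gf: "\<And>x. x \<in> carrier A \<Longrightarrow> g (f x) = x" and fg: "\<And>y. y \<in> carrier A' \<Longrightarrow> f (g y) = y"
  shows "num_hom A B = num_hom A' B"
proof -
  define F where "F = (\<lambda>h::'b \<Rightarrow> 'c. restrict (h \<circ> f) (carrier A))"
  have fc: "f x \<in> carrier A'" if "x \<in> carrier A" for x using f that unfolding hom_def by auto
  have gc: "g y \<in> carrier A" if "y \<in> carrier A'" for y using g that unfolding hom_def by auto
  have Fr: "F (restrict h (carrier A')) = restrict (h \<circ> f) (carrier A)" for h
    unfolding F_def using fc by (auto simp: restrict_def fun_eq_iff)
  have img: "(\<lambda>h. restrict h (carrier A)) ` hom A B = F ` ((\<lambda>h. restrict h (carrier A')) ` hom A' B)"
  proof
    show "(\<lambda>h. restrict h (carrier A)) ` hom A B \<subseteq> F ` ((\<lambda>h. restrict h (carrier A')) ` hom A' B)"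
    proof
      fix u assume "u \<in> (\<lambda>h. restrict h (carrier A)) ` hom A B"
      then obtain h where h: "h \<in> hom A B" "u = restrict h (carrier A)" by blast
      have "h \<circ> g \<in> hom A' B" using hom_compose[OF g h(1)] .
      moreover have "F (restrict (h \<circ> g) (carrier A')) = u"
        unfolding Fr h(2) using gf fc by (auto simp: restrict_def fun_eq_iff)
      ultimately show "u \<in> F ` ((\<lambda>h. restrict h (carrier A')) ` hom A' B)" by blast
    qed
    show "F ` ((\<lambda>h. restrict h (carrier A')) ` hom A' B) \<subseteq> (\<lambda>h. restrict h (carrier A)) ` hom A B"
    proof
      fix u assume "u \<in> F ` ((\<lambda>h. restrict h (carrier A')) ` hom A' B)"
      then obtain h where h: "h \<in> hom A' B" "u = F (restrict h (carrier A'))" by blast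
      have "h \<circ> f \<in> hom A B" using hom_compose[OF f h(1)] .
      moreover have "u = restrict (h \<circ> f) (carrier A)" using h(2) Fr by simp
      ultimately show "u \<in> (\<lambda>h. restrict h (carrier A)) ` hom A B" by blast
    qed
  qed
  have inj: "inj_on F ((\<lambda>h. restrict h (carrier A')) ` hom A' B)"
  proof (rule inj_onI)
    fix u v assume "u \<in> (\<lambda>h. restrict h (carrier A')) ` hom A' B" "v \<in> (\<lambda>h. restrict h (carrier A')) ` hom A' B"
      and e: "F u = F v"
    then obtain hu hv where u: "u = restrict hu (carrier A')" and v: "v = restrict hv (carrier A')" by blast
    show "u = v"
    proof
      fix y show "u y = v y"
      proof (cases "y \<in> carrier A'")
        case True
        have "F u (g y) = F v (g y)" using e by simp
        then show ?thesis using True gc fg unfolding F_def u v by (simp add: restrict_def)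
      next
        case False then show ?thesis unfolding u v by simp
      qed
    qed
  qed
  show ?thesis unfolding num_hom_def img using card_image[OF inj] by simp
qed

lemma tors_hom:
  assumes A: "group A" and A': "group A'" and f: "f \<in> hom A A'"
  shows "f \<in> hom (torsion_group A) (torsion_group A')"
proof -
  have gh: "group_hom A A' f" using A A' f by (simp add: group_hom_def group_hom_axioms_def)
  have "f x \<in> torsion_set A'" if x: "x \<in> torsion_set A" for x
  proof -
    obtain n::nat where n: "n > 0" "x [^]\<^bsub>A\<^esub> n = \<one>\<^bsub>A\<^esub>" "x \<in> carrier A" using x unfolding torsion_set_def by blast
    have "f x [^]\<^bsub>A'\<^esub> n = f (x [^]\<^bsub>A\<^esub> n)" using group_hom.hom_nat_pow[OF gh n(3)] by simp
    also have "\<dots> = \<one>\<^bsub>A'\<^esub>" using n(2) group_hom.hom_one[OF gh] by simp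
    finally show ?thesis unfolding torsion_set_def using n f unfolding hom_def by auto
  qed
  moreover have "torsion_set A \<subseteq> carrier A" unfolding torsion_set_def by blast
  ultimately show ?thesis using f unfolding hom_def torsion_group_def by (auto simp: subset_iff)
qed

lemma num_hom_tors_iso:
  assumes A: "group A" and A': "group A'" and f: "f \<in> iso A A'"
  shows "num_hom (torsion_group A) B = num_hom (torsion_group A') B"
proof -
  define g where "g = inv_into (carrier A) f"
  have g: "g \<in> iso A' A" unfolding g_def using group.iso_set_sym[OF A f] .
  have bij: "bij_betw f (carrier A) (carrier A')" using f unfolding iso_def by blast
  have gf: "g (f x) = x" if "x \<in> carrier A" for x
    unfolding g_def using bij that by (simp add: bij_betw_def inv_into_f_f)
  have fg: "f (g y) = y" if "y \<in> carrier A'" for y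
    unfolding g_def using bij that by (simp add: bij_betw_def f_inv_into_f)
  have tA: "torsion_set A \<subseteq> carrier A" and tA': "torsion_set A' \<subseteq> carrier A'" unfolding torsion_set_def by auto
  show ?thesis
  proof (rule num_hom_bij)
    show "f \<in> hom (torsion_group A) (torsion_group A')" using tors_hom[OF A A'] f unfolding iso_def by blast
    show "g \<in> hom (torsion_group A') (torsion_group A)" using tors_hom[OF A' A] g unfolding iso_def by blast
    show "\<And>x. x \<in> carrier (torsion_group A) \<Longrightarrow> g (f x) = x" using gf tA unfolding torsion_group_def by auto
    show "\<And>y. y \<in> carrier (torsion_group A') \<Longrightarrow> f (g y) = y" using fg tA' unfolding torsion_group_def by auto
  qed
qed

context comm_group begin

lemma quot_gen:
  assumes a: "a \<in> carrier G" and S: "S \<subseteq> carrier G"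
  shows "generate (G Mod generate G {a}) ((\<lambda>x. generate G {a} #> x) ` S)
         = (\<lambda>x. generate G {a} #> x) ` generate G (insert a S)"
proof -
  define N where "N = generate G {a}"
  define \<pi> where "\<pi> = (\<lambda>x. N #> x)"
  define Q where "Q = G Mod N"
  have N: "subgroup N G" unfolding N_def using generate_is_subgroup a by auto
  have Qc: "comm_group Q" unfolding Q_def using abelian_FactGroup[OF N] .
  have hom: "\<pi> \<in> hom G Q" unfolding Q_def \<pi>_def using normal.r_coset_hom_Mod[OF subgroup_imp_normal[OF N]] .
  have gh: "group_hom G Q \<pi>" using hom Qc by (simp add: group_hom_def group_hom_axioms_def is_group comm_group.axioms(2))
  have aS: "insert a S \<subseteq> carrier G" using a S by auto
  have "\<pi> ` generate G (insert a S) = generate Q (\<pi> ` insert a S)"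
    using group_hom.generate_img[OF gh aS] by simp
  also have "\<dots> = generate Q (\<pi> ` S)"
  proof
    interpret Q: comm_group Q by (rule Qc)
    have piS: "\<pi> ` S \<subseteq> carrier Q" using hom S unfolding hom_def by auto
    have "\<pi> a = \<one>\<^bsub>Q\<^esub>" unfolding \<pi>_def Q_def using piN[OF N a] generate.incl[of a "{a}" G] N_def by simp
    then have "\<pi> ` insert a S \<subseteq> generate Q (\<pi> ` S)"
      using generate.one[of Q "\<pi> ` S"] generate.incl[of _ "\<pi> ` S" Q] by auto
    then show "generate Q (\<pi> ` insert a S) \<subseteq> generate Q (\<pi> ` S)"
      using Q.generate_subgroup_incl Q.generate_is_subgroup[OF piS] by blast
    show "generate Q (\<pi> ` S) \<subseteq> generate Q (\<pi> ` insert a S)"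
      using Q.mono_generate by (meson image_mono subset_insertI)
  qed
  finally show ?thesis unfolding N_def \<pi>_def Q_def by simp
qed

lemma G_mult_quot:
  assumes a: "a \<in> carrier G" and S: "S \<subseteq> carrier G"
  shows "G_mult G H (insert a S) = G_mult (G Mod generate G {a}) H ((\<lambda>x. generate G {a} #> x) ` S)"
proof -
  define N where "N = generate G {a}"
  define \<pi> where "\<pi> = (\<lambda>x. N #> x)"
  define Q where "Q = G Mod N"
  define M where "M = generate G (insert a S)"
  have N: "subgroup N G" unfolding N_def using generate_is_subgroup a by auto
  have aS: "insert a S \<subseteq> carrier G" using a S by auto
  have M: "subgroup M G" unfolding M_def using generate_is_subgroup aS by auto
  have NM: "N \<subseteq> M" unfolding N_def M_def by (rule mono_generate) auto
  have Qc: "comm_group Q" unfolding Q_def using abelian_FactGroup[OF N] .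
  interpret Q: comm_group Q by (rule Qc)
  have hom: "\<pi> \<in> hom G Q" unfolding Q_def \<pi>_def using normal.r_coset_hom_Mod[OF subgroup_imp_normal[OF N]] .
  have gh: "group_hom G Q \<pi>" using hom Qc by (simp add: group_hom_def group_hom_axioms_def is_group comm_group.axioms(2))
  define M' where "M' = generate Q (\<pi> ` S)"
  have M'eq: "M' = \<pi> ` M" unfolding M'_def M_def \<pi>_def Q_def N_def using quot_gen[OF a S] .
  have M': "subgroup M' Q" unfolding M'eq using group_hom.subgroup_img_is_subgroup[OF gh M] .
  have M'n: "M' \<lhd> Q" using Q.subgroup_imp_normal[OF M'] .
  define \<psi> where "\<psi> = (\<lambda>U. r_coset Q M' U) \<circ> \<pi>"
  have hom2: "\<psi> \<in> hom G (Q Mod M')" unfolding \<psi>_def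
    using Group.hom_compose[OF hom normal.r_coset_hom_Mod[OF M'n]] .
  have grp2: "group (Q Mod M')" using normal.factorgroup_is_group[OF M'n] .
  have gh2: "group_hom G (Q Mod M') \<psi>" using hom2 grp2 by (simp add: group_hom_def group_hom_axioms_def is_group)
  have cQ: "carrier Q = \<pi> ` carrier G" unfolding Q_def \<pi>_def by (rule carrier_FactGroup)
  have surj: "\<psi> ` carrier G = carrier (Q Mod M')"
    unfolding \<psi>_def carrier_FactGroup[of Q M'] cQ by (simp add: image_comp)
  have ker: "kernel G (Q Mod M') \<psi> = M"
  proof -
    have "x \<in> M \<longleftrightarrow> \<psi> x = M'" if x: "x \<in> carrier G" for x
    proof -
      have px: "\<pi> x \<in> carrier Q" using hom x unfolding hom_def by auto
      have "\<psi> x = M' \<longleftrightarrow> \<pi> x \<in> M'" unfolding \<psi>_def using Q.piN[OF M' px] by simp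
      also have "\<dots> \<longleftrightarrow> x \<in> M"
      proof
        assume "\<pi> x \<in> M'"
        then obtain m where m: "m \<in> M" "\<pi> x = \<pi> m" unfolding M'eq by blast
        have mc: "m \<in> carrier G" using m M subgroup.subset by blast
        have "x \<otimes> inv m \<in> M" using pi_eq[OF N x mc] m NM unfolding \<pi>_def by blast
        then have "(x \<otimes> inv m) \<otimes> m \<in> M" using m subgroup.m_closed[OF M] by blast
        then show "x \<in> M" using x mc by (simp add: m_assoc)
      qed (auto simp: M'eq)
      finally show ?thesis by simp
    qed
    then have eq: "\<And>x. x \<in> carrier G \<Longrightarrow> (\<psi> x = M') = (x \<in> M)" by blast
    have Mc: "M \<subseteq> carrier G" using M subgroup.subset by blast
    show ?thesis
    proof
      show "kernel G (Q Mod M') \<psi> \<subseteq> M" unfolding kernel_def one_FactGroup using eq by blast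
      show "M \<subseteq> kernel G (Q Mod M') \<psi>" unfolding kernel_def one_FactGroup using eq Mc by blast
    qed
  qed
  have iso: "(\<lambda>U. the_elem (\<psi> ` U)) \<in> iso (G Mod M) (Q Mod M')"
    using group_hom.FactGroup_iso_set[OF gh2 surj] unfolding ker .
  have grp1: "group (G Mod M)" using normal.factorgroup_is_group[OF subgroup_imp_normal[OF M]] .
  have "num_hom (torsion_group (G Mod M)) H = num_hom (torsion_group (Q Mod M')) H"
    using num_hom_tors_iso[OF grp1 grp2 iso] .
  then show ?thesis unfolding G_mult_def M_def M'_def Q_def \<pi>_def N_def by simp
qed

lemma rank_quot_main:
  assumes a: "a \<in> carrier G" and S: "S \<subseteq> carrier G"
    and F: "finite F" "F \<subseteq> carrier G" "generate G F = carrier G"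
  shows "gen_rank G (insert a S) =
    (if is_loop G a then gen_rank (G Mod generate G {a}) ((\<lambda>x. generate G {a} #> x) ` S)
     else Suc (gen_rank (G Mod generate G {a}) ((\<lambda>x. generate G {a} #> x) ` S)))"
proof -
  define N where "N = generate G {a}"
  define \<pi> where "\<pi> = (\<lambda>x. N #> x)"
  define M where "M = generate G (insert a S)"
  have N: "subgroup N G" unfolding N_def using generate_is_subgroup a by auto
  have aS: "insert a S \<subseteq> carrier G" using a S by auto
  have M: "subgroup M G" unfolding M_def using generate_is_subgroup aS by auto
  have NM: "N \<subseteq> M" unfolding N_def M_def by (rule mono_generate) auto
  have aM: "a \<in> M" unfolding M_def using generate.incl[of a "insert a S" G] by simp
  have r1: "gen_rank G (insert a S) = Max (KS G {\<one>} M)"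
    unfolding gen_rank_def M_def[symmetric] using ab_rank_sub[OF M] .
  have r2: "gen_rank (G Mod N) (\<pi> ` S) = Max (KS G N M)"
    unfolding gen_rank_def \<pi>_def N_def quot_gen[OF a S]
    using rank_quot[OF N M NM] unfolding \<pi>_def N_def M_def .
  show ?thesis
  proof (cases "is_loop G a")
    case True
    then obtain k::nat where k: "k > 0" "a [^] k = \<one>" unfolding is_loop_def torsion_set_def by blast
    have "KS G {\<one>} M = KS G N M" unfolding N_def using KS_torsion[OF a k] .
    then show ?thesis using True r1 r2 unfolding \<pi>_def N_def by simp
  next
    case False
    then have nt: "\<And>k::nat. k > 0 \<Longrightarrow> a [^] k \<noteq> \<one>" using a unfolding is_loop_def torsion_set_def by blast
    have "KS G {\<one>} M = insert 0 (Suc ` KS G N M)" unfolding N_def using KS_nontorsion[OF M aM nt] .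
    then have "Max (KS G {\<one>} M) = Suc (Max (KS G N M))"
      using Max_Suc_KS KS_finite[OF F N] KS_zero by simp
    then show ?thesis using False r1 r2 unfolding \<pi>_def N_def by simp
  qed
qed

end

theorem mainTheorem4:
  fixes Gam :: "('a, 'b) monoid_scheme" and G :: "('c, 'd) monoid_scheme"
    and A :: "nat \<Rightarrow> 'a" and n i :: nat and q :: real and v :: "nat \<Rightarrow> real"
  assumes "comm_group Gam" and "finitely_generated_group Gam"
    and "comm_group G" and "torsion_wise_finite G"
    and "A ` {1..n} \<subseteq> carrier Gam"
    and "i \<in> {1..n}"
    and "q \<noteq> 0"
  shows "tutteZ Gam G A {1..n} q v =
    (if is_loop Gam (A i)
     then tutteZ Gam G A ({1..n} - {i}) q v
          + v i * tutteZ (Gam Mod generate Gam {A i}) G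
                    (\<lambda>j. generate Gam {A i} #>\<^bsub>Gam\<^esub> A j) ({1..n} - {i}) q v
     else tutteZ Gam G A ({1..n} - {i}) q v
          + v i * inverse q * tutteZ (Gam Mod generate Gam {A i}) G
                    (\<lambda>j. generate Gam {A i} #>\<^bsub>Gam\<^esub> A j) ({1..n} - {i}) q v)"
proof -
  interpret Gm: comm_group Gam by fact
  obtain F where F: "finite F" "F \<subseteq> carrier Gam" "generate Gam F = carrier Gam"
    using assms(2) unfolding finitely_generated_group_def by blast
  define J where "J = {1..n} - {i}"
  define a where "a = A i"
  define N where "N = generate Gam {a}"
  define B where "B = (\<lambda>j. N #>\<^bsub>Gam\<^esub> A j)"
  define Q where "Q = Gam Mod N"
  have I: "{1..n} = insert i J" unfolding J_def using assms(6) by blast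
  have iJ: "i \<notin> J" unfolding J_def by blast
  have fJ: "finite J" unfolding J_def by simp
  have a: "a \<in> carrier Gam" unfolding a_def using assms(5,6) by blast
  have AJ: "A ` T \<subseteq> carrier Gam" if "T \<subseteq> J" for T using that assms(5) unfolding J_def by blast
  have BT: "B ` T = (\<lambda>x. N #>\<^bsub>Gam\<^esub> x) ` (A ` T)" for T unfolding B_def by (simp add: image_image)
  define t where "t = (\<lambda>T. real (G_mult Q G (B ` T)) * inverse q ^ gen_rank Q (B ` T) * (\<Prod>j\<in>T. v j))"
  have split: "tutteZ Gam G A {1..n} q v = tutteZ Gam G A J q v +
      (\<Sum>T\<in>Pow J. real (G_mult Gam G (A ` insert i T)) * inverse q ^ gen_rank Gam (A ` insert i T) * (\<Prod>j\<in>insert i T. v j))"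
  proof -
    have d: "Pow J \<inter> insert i ` Pow J = {}" using iJ by blast
    have inj: "inj_on (insert i) (Pow J)"
    proof (rule inj_onI)
      fix x y assume "x \<in> Pow J" "y \<in> Pow J" "insert i x = insert i y"
      then show "x = y" using iJ by (metis PowD insert_ident subsetD)
    qed
    have u: "sum f (Pow J \<union> insert i ` Pow J) = sum f (Pow J) + sum f (insert i ` Pow J)" for f :: "nat set \<Rightarrow> real"
      by (rule sum.union_disjoint) (use fJ d in auto)
    have r: "sum f (insert i ` Pow J) = (\<Sum>T\<in>Pow J. f (insert i T))" for f :: "nat set \<Rightarrow> real"
      using sum.reindex[OF inj, of f] by (simp add: comp_def)
    show ?thesis unfolding tutteZ_def I Pow_insert u r by (rule refl)
  qed
  have trm: "real (G_mult Gam G (A ` insert i T)) * inverse q ^ gen_rank Gam (A ` insert i T) * (\<Prod>j\<in>insert i T. v j)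
      = v i * (if is_loop Gam a then 1 else inverse q) * t T" if T: "T \<in> Pow J" for T
  proof -
    have TJ: "T \<subseteq> J" using T by blast
    have fT: "finite T" using TJ fJ finite_subset by blast
    have iT: "i \<notin> T" using TJ iJ by blast
    have Ai: "A ` insert i T = insert a (A ` T)" unfolding a_def by simp
    have gm: "G_mult Gam G (A ` insert i T) = G_mult Q G (B ` T)"
      unfolding Ai BT Q_def N_def using Gm.G_mult_quot[OF a AJ[OF TJ]] .
    have gr: "gen_rank Gam (A ` insert i T) = (if is_loop Gam a then gen_rank Q (B ` T) else Suc (gen_rank Q (B ` T)))"
      unfolding Ai BT Q_def N_def using Gm.rank_quot_main[OF a AJ[OF TJ] F] .
    have pr: "(\<Prod>j\<in>insert i T. v j) = v i * (\<Prod>j\<in>T. v j)" using fT iT by simp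
    show ?thesis unfolding gm gr pr t_def by (simp add: algebra_simps)
  qed
  have "tutteZ Gam G A {1..n} q v = tutteZ Gam G A J q v + v i * (if is_loop Gam a then 1 else inverse q) * (\<Sum>T\<in>Pow J. t T)"
    unfolding split using trm by (simp add: sum_distrib_left)
  moreover have "tutteZ Q G B J q v = (\<Sum>T\<in>Pow J. t T)" unfolding tutteZ_def t_def by simp
  ultimately show ?thesis unfolding J_def[symmetric] a_def[symmetric] N_def[symmetric] Q_def[symmetric]
    B_def[symmetric] by simp
qed

end
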